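(* With the convention $g_1(0)=h_1(0)=0$, $$\sum_{M\geq1}(g_1(M)-g_1(M-1))x^M=\frac{x^2-x^3}{(1-x-x^2)^2}=\sum_{M\geq1}(h_1(M)-h_1(M-1))x^M,$$ and $$\sum_{M\geq1}(g(M)-h(M))x^M=\frac{x^2-x^3}{(1-x-x^2)^2}.$$
   Context: The perimeter of a nonempty partition $\lambda$ with largest part $\lambda_1$ and $\ell(\lambda)$ parts is $\lambda_1+\ell(\lambda)-1$. $\mathcal G(M)$ is the set of partitions into odd parts with perimeter $M$, $\mathcal H(M)$ the set of partitions into distinct parts with perimeter $M$; $g(M)$ (resp. $h(M)$) is the total number of parts, summed over all partitions in $\mathcal G(M)$ (resp. $\mathcal H(M)$). $\mathcal G_1(M)$ is the set of partitions with perimeter $M$ in which exactly one distinct even integer occurs as a part (possibly with multiplicity greater than one) and all other parts are odd; $\mathcal H_1(M)$ is the set of partitions with perimeter $M$ in which exactly one part value occurs at least twice and every other part value occurs exactly once. $g_1(M)=|\mathcal G_1(M)|$, $h_1(M)=|\mathcal H_1(M)|$. *)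

theory Defs
  imports "HOL-Library.Multiset" "HOL-Computational_Algebra.Formal_Power_Series"
begin

definition is_partition :: "nat multiset \<Rightarrow> bool" where
  "is_partition p \<longleftrightarrow> p \<noteq> {#} \<and> (\<forall>x\<in>#p. 0 < x)"

definition perimeter :: "nat multiset \<Rightarrow> nat" where
  "perimeter p = Max (set_mset p) + size p - 1"

definition partitions_per :: "nat \<Rightarrow> nat multiset set" where
  "partitions_per M = {p. is_partition p \<and> perimeter p = M}"

definition calG :: "nat \<Rightarrow> nat multiset set" where
  "calG M = {p \<in> partitions_per M. \<forall>x\<in>#p. odd x}"

definition calH :: "nat \<Rightarrow> nat multiset set" where
  "calH M = {p \<in> partitions_per M. \<forall>x. count p x \<le> 1}"

definition calG1 :: "nat \<Rightarrow> nat multiset set" where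
  "calG1 M = {p \<in> partitions_per M. card {x \<in> set_mset p. even x} = 1}"

definition calH1 :: "nat \<Rightarrow> nat multiset set" where
  "calH1 M = {p \<in> partitions_per M. card {x. 2 \<le> count p x} = 1}"

definition g :: "nat \<Rightarrow> nat" where "g M = (\<Sum>p\<in>calG M. size p)"
definition h :: "nat \<Rightarrow> nat" where "h M = (\<Sum>p\<in>calH M. size p)"

definition g1 :: "nat \<Rightarrow> nat" where "g1 M = (if M = 0 then 0 else card (calG1 M))"
definition h1 :: "nat \<Rightarrow> nat" where "h1 M = (if M = 0 then 0 else card (calH1 M))"

end

theory Submission
  imports Defs
begin


definition mx :: "nat multiset \<Rightarrow> nat" where "mx p = Max (set_mset p)"
definition sh :: "nat \<Rightarrow> nat multiset \<Rightarrow> nat multiset" where "sh k q = add_mset (mx q + k) (q - {#mx q#})"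
definition us :: "nat \<Rightarrow> nat multiset \<Rightarrow> nat multiset" where "us k p = add_mset (mx p - k) (p - {#mx p#})"
definition tp :: "nat multiset \<Rightarrow> nat multiset" where "tp q = add_mset (mx q + 1) q"
definition am :: "nat multiset \<Rightarrow> nat multiset" where "am q = add_mset (mx q) q"
definition rmx :: "nat multiset \<Rightarrow> nat multiset" where "rmx p = p - {#mx p#}"

lemma mx_in: "p \<noteq> {#} \<Longrightarrow> mx p \<in># p"
  unfolding mx_def by (simp add: Max_in)

lemma mx_ge: "x \<in># p \<Longrightarrow> x \<le> mx p"
  unfolding mx_def by simp

lemma mx_eqI: "a \<in># p \<Longrightarrow> (\<And>x. x \<in># p \<Longrightarrow> x \<le> a) \<Longrightarrow> mx p = a"
  unfolding mx_def by (intro Max_eqI) auto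

lemma perimeter_mx: "perimeter p = mx p + size p - 1"
  unfolding perimeter_def mx_def by simp

lemma finite_partitions_per: "finite (partitions_per M)"
proof -
  have "partitions_per M \<subseteq> mset ` {xs. set xs \<subseteq> {0..M} \<and> length xs \<le> M}"
  proof
    fix p assume "p \<in> partitions_per M"
    hence p: "p \<noteq> {#}" "perimeter p = M" "\<forall>x\<in>#p. 0 < x" by (auto simp: partitions_per_def is_partition_def)
    have "mx p \<ge> 1" using p(3) mx_in[OF p(1)] by auto
    obtain xs where xs: "p = mset xs" by (metis ex_mset)
    have "size p \<ge> 1" using p by (simp add: Suc_le_eq nonempty_has_size)
    hence M: "mx p \<le> M" "size p \<le> M" using p(2) \<open>mx p \<ge> 1\<close> by (simp_all add: perimeter_mx)
    have "x \<le> M" if "x \<in> set xs" for x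
    proof -
      have "x \<in># p" using xs that by simp
      hence "x \<le> mx p" by (rule mx_ge)
      thus ?thesis using M(1) by simp
    qed
    hence "length xs \<le> M" "set xs \<subseteq> {0..M}" using xs M by auto
    thus "p \<in> mset ` {xs. set xs \<subseteq> {0..M} \<and> length xs \<le> M}" using xs by auto
  qed
  moreover have "finite {xs. set xs \<subseteq> {0..M} \<and> length xs \<le> M}"
    by (rule finite_lists_length_le) simp
  ultimately show ?thesis by (rule finite_subset[OF _ finite_imageI])
qed

lemma addmax:
  assumes "q \<noteq> {#}"
  shows "mx (am q) = mx q" "count (am q) (mx q) = count q (mx q) + 1"
    "set_mset (am q) = set_mset q" "rmx (am q) = q" "size (am q) = size q + 1" "am q \<noteq> {#}"
    "\<And>x. x \<noteq> mx q \<Longrightarrow> count (am q) x = count q x"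
proof -
  show m: "mx (am q) = mx q" using mx_in[OF assms] unfolding am_def by (auto intro!: mx_eqI mx_ge)
  show "count (am q) (mx q) = count q (mx q) + 1" unfolding am_def by simp
  show "set_mset (am q) = set_mset q" using mx_in[OF assms] unfolding am_def by auto
  show "rmx (am q) = q" unfolding rmx_def m unfolding am_def by simp
  show "size (am q) = size q + 1" "am q \<noteq> {#}" "\<And>x. x \<noteq> mx q \<Longrightarrow> count (am q) x = count q x"
    unfolding am_def by auto
qed

lemma remmax:
  assumes "2 \<le> count p (mx p)"
  shows "rmx p \<noteq> {#}" "mx (rmx p) = mx p" "set_mset (rmx p) = set_mset p"
    "count (rmx p) (mx p) = count p (mx p) - 1" "size (rmx p) = size p - 1"
    "am (rmx p) = p" "\<And>x. x \<noteq> mx p \<Longrightarrow> count (rmx p) x = count p x"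
  unfolding am_def rmx_def
proof -
  have i: "mx p \<in># p - {#mx p#}" using assms by (simp add: in_diff_count)
  thus "p - {#mx p#} \<noteq> {#}" by auto
  show s: "set_mset (p - {#mx p#}) = set_mset p"
  proof (intro set_eqI iffI)
    fix x assume "x \<in># p - {#mx p#}" thus "x \<in># p" by (rule in_diffD)
  next
    fix x assume x: "x \<in># p"
    show "x \<in># p - {#mx p#}" proof (cases "x = mx p")
      case True thus ?thesis using i by simp
    next
      case False thus ?thesis using x by (simp add: in_diff_count)
    qed
  qed
  show "mx (p - {#mx p#}) = mx p" using i by (intro mx_eqI) (auto simp: s mx_ge)
  show "count (p - {#mx p#}) (mx p) = count p (mx p) - 1" by simp
  show "size (p - {#mx p#}) = size p - 1" using i by (simp add: size_Diff_singleton in_diffD)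
  show "add_mset (mx (p - {#mx p#})) (p - {#mx p#}) = p" using i \<open>mx (p - {#mx p#}) = mx p\<close> by (simp add: in_diffD)
  show "\<And>x. x \<noteq> mx p \<Longrightarrow> count (p - {#mx p#}) x = count p x" by simp
qed

lemma mem_diff1: "count p a = 1 \<Longrightarrow> x \<in># p - {#a#} \<longleftrightarrow> x \<in># p \<and> x \<noteq> a"
  by (cases "x = a") (auto simp: in_diff_count)

lemma count_mx_diff: "count p (mx p) = 1 \<Longrightarrow> x \<in># p - {#mx p#} \<Longrightarrow> x < mx p \<and> x \<in># p"
  using mem_diff1[of p "mx p" x] mx_ge[of x p] by auto

lemma set_diff_mx: "count p (mx p) = 1 \<Longrightarrow> set_mset (p - {#mx p#}) = set_mset p - {mx p}"
  using mem_diff1[of p "mx p"] by auto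


lemma sh_props:
  assumes "q \<noteq> {#}" "0 < k"
  shows "mx (sh k q) = mx q + k" "count (sh k q) (mx (sh k q)) = 1" "size (sh k q) = size q"
    "rmx (sh k q) = rmx q" "us k (sh k q) = q" "\<And>x. x \<in># rmx (sh k q) \<Longrightarrow> x + k \<le> mx (sh k q)"
    "set_mset (sh k q) = insert (mx q + k) (set_mset (rmx q))" "sh k q \<noteq> {#}"
    "\<And>x. x \<in># rmx q \<Longrightarrow> x \<le> mx q"
proof -
  define s where "s = sh k q"
  have s_def': "s \<equiv> add_mset (mx q + k) (q - {#mx q#})" unfolding s_def sh_def by simp
  have mi: "mx q \<in># q" using mx_in[OF assms(1)] .
  show m: "mx (sh k q) = mx q + k" unfolding sh_def
    by (intro mx_eqI) (auto, metis in_diffD mx_ge trans_le_add1)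
  have "mx q + k \<notin># q" using mx_ge[of "mx q + k" q] assms(2) by auto
  hence "count q (mx q + k) = 0" by (simp add: not_in_iff)
  hence "count s (mx q + k) = 1" unfolding s_def' by simp
  thus "count (sh k q) (mx (sh k q)) = 1" using m s_def by simp
  have sp: "size q \<ge> 1" using assms(1) by (simp add: Suc_le_eq nonempty_has_size)
  show "size (sh k q) = size q" unfolding sh_def using mi sp by (simp add: size_Diff_singleton)
  show d: "rmx (sh k q) = rmx q" unfolding rmx_def m unfolding sh_def by simp
  have "us k (sh k q) = add_mset (mx (sh k q) - k) (rmx (sh k q))" by (simp add: us_def rmx_def)
  also have "\<dots> = add_mset (mx q) (rmx q)" by (simp add: m d)
  also have "\<dots> = q" using mi by (simp add: rmx_def)
  finally show "us k (sh k q) = q" .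
  show "\<And>x. x \<in># rmx (sh k q) \<Longrightarrow> x + k \<le> mx (sh k q)" unfolding d m unfolding rmx_def
    by (metis in_diffD mx_ge add_le_mono1)
  show "set_mset (sh k q) = insert (mx q + k) (set_mset (rmx q))" unfolding sh_def rmx_def by simp
  show "sh k q \<noteq> {#}" unfolding sh_def by simp
  show "\<And>x. x \<in># rmx q \<Longrightarrow> x \<le> mx q" unfolding rmx_def by (metis in_diffD mx_ge)
qed

lemma us_props:
  assumes "p \<noteq> {#}" "count p (mx p) = 1" "\<And>x. x \<in># rmx p \<Longrightarrow> x + k \<le> mx p" "k \<le> mx p"
  shows "mx (us k p) = mx p - k" "size (us k p) = size p" "us k p \<noteq> {#}" "rmx (us k p) = rmx p"
    "sh k (us k p) = p"
    "set_mset (us k p) = insert (mx p - k) (set_mset p - {mx p})"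
proof -
  have mi: "mx p \<in># p" using mx_in[OF assms(1)] .
  show m: "mx (us k p) = mx p - k" unfolding us_def
    by (intro mx_eqI) (use assms(3) in \<open>fastforce simp: rmx_def\<close>)+
  have sp: "size p \<ge> 1" using assms(1) by (simp add: Suc_le_eq nonempty_has_size)
  show "size (us k p) = size p" unfolding us_def using mi sp by (simp add: size_Diff_singleton)
  show "us k p \<noteq> {#}" unfolding us_def by simp
  show d: "rmx (us k p) = rmx p" unfolding rmx_def m unfolding us_def by simp
  have "sh k (us k p) = add_mset (mx (us k p) + k) (rmx (us k p))" by (simp add: sh_def rmx_def)
  also have "\<dots> = add_mset (mx p) (rmx p)" using assms(4) by (simp add: m d)
  also have "\<dots> = p" using mi by (simp add: rmx_def)
  finally show "sh k (us k p) = p" .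
  show "set_mset (us k p) = insert (mx p - k) (set_mset p - {mx p})" unfolding us_def
    using set_diff_mx[OF assms(2)] by simp
qed

lemma tp_props:
  assumes "q \<noteq> {#}"
  shows "mx (tp q) = mx q + 1" "count (tp q) (mx (tp q)) = 1" "rmx (tp q) = q" "size (tp q) = size q + 1"
    "mx (tp q) - 1 \<in># tp q" "set_mset (tp q) = insert (mx q + 1) (set_mset q)" "tp q \<noteq> {#}"
    "\<And>x. x \<noteq> mx q + 1 \<Longrightarrow> count (tp q) x = count q x"
proof -
  have mi: "mx q \<in># q" using mx_in[OF assms(1)] .
  show m: "mx (tp q) = mx q + 1" unfolding tp_def by (intro mx_eqI) (auto dest: mx_ge)
  have "mx q + 1 \<notin># q" using mx_ge[of "mx q + 1" q] by auto
  hence "count q (mx q + 1) = 0" by (simp add: not_in_iff)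
  hence "count (tp q) (mx q + 1) = 1" unfolding tp_def by simp
  thus "count (tp q) (mx (tp q)) = 1" using m by simp
  show "rmx (tp q) = q" unfolding rmx_def m unfolding tp_def by simp
  show "size (tp q) = size q + 1" unfolding tp_def by simp
  show "mx (tp q) - 1 \<in># tp q" unfolding m unfolding tp_def using mi by simp
  show "set_mset (tp q) = insert (mx q + 1) (set_mset q)" unfolding tp_def by simp
  show "tp q \<noteq> {#}" "\<And>x. x \<noteq> mx q + 1 \<Longrightarrow> count (tp q) x = count q x" unfolding tp_def by auto
qed

lemma rm_props:
  assumes "p \<noteq> {#}" "count p (mx p) = 1" "mx p - 1 \<in># p" "1 \<le> mx p"
  shows "rmx p \<noteq> {#}" "mx (rmx p) = mx p - 1" "tp (rmx p) = p" "size (rmx p) = size p - 1"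
    "set_mset (rmx p) = set_mset p - {mx p}" "\<And>x. x \<noteq> mx p \<Longrightarrow> count (rmx p) x = count p x"
proof -
  have mi: "mx p \<in># p" using mx_in[OF assms(1)] .
  have ne: "mx p - 1 \<noteq> mx p" using assms(4) by simp
  have i: "mx p - 1 \<in># rmx p" unfolding rmx_def using assms(3) ne by (simp add: in_diff_count)
  thus "rmx p \<noteq> {#}" by auto
  show m: "mx (rmx p) = mx p - 1" using i count_mx_diff[OF assms(2)] unfolding rmx_def
    by (intro mx_eqI) fastforce+
  show "tp (rmx p) = p" unfolding tp_def m unfolding rmx_def using assms(4) mi by simp
  show "size (rmx p) = size p - 1" unfolding rmx_def using mi by (simp add: size_Diff_singleton)
  show "set_mset (rmx p) = set_mset p - {mx p}" unfolding rmx_def using set_diff_mx[OF assms(2)] .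
  show "\<And>x. x \<noteq> mx p \<Longrightarrow> count (rmx p) x = count p x" unfolding rmx_def by simp
qed




lemma size_ge1: "p \<noteq> {#} \<Longrightarrow> size p \<ge> 1"
  by (simp add: Suc_le_eq nonempty_has_size)

lemma memP: "p \<in> partitions_per M \<longleftrightarrow> p \<noteq> {#} \<and> (\<forall>x\<in>#p. 0<x) \<and> mx p + size p = Suc M"
  using size_ge1[of p] by (auto simp: partitions_per_def is_partition_def perimeter_mx)

lemma memG: "p \<in> calG M \<longleftrightarrow> p \<noteq> {#} \<and> (\<forall>x\<in>#p. 0<x) \<and> mx p + size p = Suc M \<and> (\<forall>x\<in>#p. odd x)"
  by (auto simp: calG_def memP)

lemma single_one:
  assumes "p \<noteq> {#}" "count p (mx p) = 1" "\<forall>x\<in>#p. 0 < x" "mx p = 1" shows "size p = 1"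
proof -
  have e: "rmx p = {#}"
  proof (rule ccontr)
    assume "rmx p \<noteq> {#}"
    then obtain x where x: "x \<in># p - {#mx p#}" unfolding rmx_def by blast
    from count_mx_diff[OF assms(2) x] assms(3,4) show False by auto
  qed
  have "size p = size (rmx p) + 1"
    using mx_in[OF assms(1)] size_ge1[OF assms(1)] by (simp add: size_Diff_singleton rmx_def)
  thus ?thesis using e by simp
qed

lemma rmx_mem: "x \<in># rmx p \<Longrightarrow> x \<in># p"
  unfolding rmx_def by (rule in_diffD)

lemma G_A1: "bij_betw am (calG (Suc n)) {p \<in> calG (Suc (Suc n)). 2 \<le> count p (mx p)}"
proof (rule bij_betw_byWitness[where f'=rmx])
  show "\<forall>a\<in>calG (Suc n). rmx (am a) = a" by (auto simp: memG addmax)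
  show "\<forall>a'\<in>{p \<in> calG (Suc (Suc n)). 2 \<le> count p (mx p)}. am (rmx a') = a'"
    by (auto simp: remmax)
  show "am ` calG (Suc n) \<subseteq> {p \<in> calG (Suc (Suc n)). 2 \<le> count p (mx p)}"
  proof safe
    fix q assume q: "q \<in> calG (Suc n)"
    hence ne: "q \<noteq> {#}" by (simp add: memG)
    have "mx q \<in># q" using mx_in[OF ne] .
    thus "am q \<in> calG (Suc (Suc n))" using q by (auto simp: memG addmax[OF ne])
    show "2 \<le> count (am q) (mx (am q))" using \<open>mx q \<in># q\<close>
      by (simp add: addmax[OF ne])
  qed
  show "rmx ` {p \<in> calG (Suc (Suc n)). 2 \<le> count p (mx p)} \<subseteq> calG (Suc n)"
  proof safe
    fix p assume p: "p \<in> calG (Suc (Suc n))" "2 \<le> count p (mx p)"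
    have "size p \<ge> 1" using p size_ge1 by (auto simp: memG)
    thus "rmx p \<in> calG (Suc n)" using p by (auto simp: memG remmax[OF p(2)] dest: rmx_mem)
  qed
qed

lemma G_A2: "bij_betw (sh 2) (calG n) {p \<in> calG (Suc (Suc n)). count p (mx p) = 1}"
proof (rule bij_betw_byWitness[where f'="us 2"])
  show "\<forall>a\<in>calG n. us 2 (sh 2 a) = a" by (auto simp: memG sh_props)
  have key: "\<And>x. x \<in># rmx p \<Longrightarrow> x + 2 \<le> mx p" "2 \<le> mx p"
    if p: "p \<in> calG (Suc (Suc n))" "count p (mx p) = 1" for p
  proof -
    have ne: "p \<noteq> {#}" and o: "\<forall>x\<in>#p. odd x" "\<forall>x\<in>#p. 0 < x" using p by (auto simp: memG)
    have om: "odd (mx p)" using o mx_in[OF ne] by auto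
    show a: "x + 2 \<le> mx p" if "x \<in># rmx p" for x
    proof -
      have "x < mx p" "odd x" using count_mx_diff[OF p(2)] that o unfolding rmx_def by auto
      thus ?thesis using om by presburger
    qed
    show "2 \<le> mx p"
    proof (cases "mx p = 1")
      case True
      hence "size p = 1" using single_one[OF ne p(2) o(2)] by simp
      thus ?thesis using p True by (simp add: memG)
    next
      case False thus ?thesis using om by presburger
    qed
  qed
  show "\<forall>a'\<in>{p \<in> calG (Suc (Suc n)). count p (mx p) = 1}. sh 2 (us 2 a') = a'"
  proof
    fix p assume p: "p \<in> {p \<in> calG (Suc (Suc n)). count p (mx p) = 1}"
    hence ne: "p \<noteq> {#}" by (simp add: memG)
    show "sh 2 (us 2 p) = p" using us_props(5)[OF ne _ key(1) key(2)] p by simp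
  qed
  show "sh 2 ` calG n \<subseteq> {p \<in> calG (Suc (Suc n)). count p (mx p) = 1}"
  proof safe
    fix q assume q: "q \<in> calG n"
    hence ne: "q \<noteq> {#}" by (simp add: memG)
    show "count (sh 2 q) (mx (sh 2 q)) = 1" using sh_props(2)[OF ne] by simp
    have "odd (mx q)" using q mx_in[OF ne] by (auto simp: memG)
    thus "sh 2 q \<in> calG (Suc (Suc n))"
      using q sh_props(1,3,7,8)[OF ne, of 2] by (auto simp: memG dest: rmx_mem)
  qed
  show "us 2 ` {p \<in> calG (Suc (Suc n)). count p (mx p) = 1} \<subseteq> calG n"
  proof safe
    fix p assume p: "p \<in> calG (Suc (Suc n))" "count p (mx p) = 1"
    have ne: "p \<noteq> {#}" using p by (simp add: memG)
    note u = us_props[OF ne p(2) key(1)[OF p] key(2)[OF p]]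
    have "odd (mx p)" using p mx_in[OF ne] by (auto simp: memG)
    hence "odd (mx p - 2)" "2 < mx p" using key(2)[OF p] by presburger+
    thus "us 2 p \<in> calG n"
      using p u(1,2,3,6) by (auto simp: memG)
  qed
qed




lemma memH: "p \<in> calH M \<longleftrightarrow> p \<noteq> {#} \<and> (\<forall>x\<in>#p. 0<x) \<and> mx p + size p = Suc M \<and> (\<forall>x. count p x \<le> 1)"
  by (auto simp: calH_def memP)

lemma cnt1: "(\<forall>x. count p x \<le> 1) \<Longrightarrow> p \<noteq> {#} \<Longrightarrow> count p (mx p) = 1"
proof -
  assume d: "\<forall>x. count p x \<le> 1" and ne: "p \<noteq> {#}"
  have "count p (mx p) > 0" using mx_in[OF ne] by simp
  moreover have "count p (mx p) \<le> 1" using d by blast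
  ultimately show ?thesis by linarith
qed

lemma cnt_add_diff: "count m x \<le> 1 \<Longrightarrow> (x = a \<Longrightarrow> count m x = 0) \<Longrightarrow> count (add_mset a (m - {#b#})) x \<le> 1"
  by (cases "x = a") auto

lemma H_B1: "bij_betw (sh 1) (calH (Suc n)) {p \<in> calH (Suc (Suc n)). mx p - 1 \<notin># p}"
proof (rule bij_betw_byWitness[where f'="us 1"])
  show "\<forall>a\<in>calH (Suc n). us 1 (sh 1 a) = a" by (auto simp: memH sh_props)
  have key: "\<And>x. x \<in># rmx p \<Longrightarrow> x + 1 \<le> mx p" "2 \<le> mx p" "count p (mx p) = 1"
    if p: "p \<in> calH (Suc (Suc n))" for p
  proof -
    have ne: "p \<noteq> {#}" and o: "\<forall>x. count p x \<le> 1" "\<forall>x\<in>#p. 0 < x" using p by (auto simp: memH)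
    show c: "count p (mx p) = 1" using cnt1[OF o(1) ne] .
    show a: "x + 1 \<le> mx p" if "x \<in># rmx p" for x
      using count_mx_diff[OF c, of x] that unfolding rmx_def by auto
    show "2 \<le> mx p"
    proof (rule ccontr)
      assume "\<not> 2 \<le> mx p"
      hence "mx p = 1" using o(2) mx_in[OF ne] by fastforce
      hence "size p = 1" using single_one[OF ne c o(2)] by simp
      thus False using p \<open>mx p = 1\<close> by (simp add: memH)
    qed
  qed
  show "\<forall>a'\<in>{p \<in> calH (Suc (Suc n)). mx p - 1 \<notin># p}. sh 1 (us 1 a') = a'"
  proof
    fix p assume p: "p \<in> {p \<in> calH (Suc (Suc n)). mx p - 1 \<notin># p}"
    hence ne: "p \<noteq> {#}" by (simp add: memH)
    have "2 \<le> mx p" using key(2) p by simp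
    thus "sh 1 (us 1 p) = p" using us_props(5)[OF ne key(3) key(1)] p by simp
  qed
  show "sh 1 ` calH (Suc n) \<subseteq> {p \<in> calH (Suc (Suc n)). mx p - 1 \<notin># p}"
  proof safe
    fix q assume q: "q \<in> calH (Suc n)"
    hence ne: "q \<noteq> {#}" and d: "\<forall>x. count q x \<le> 1" by (simp_all add: memH)
    have c: "count q (mx q) = 1" using cnt1[OF d ne] .
    have nq: "mx q + 1 \<notin># q" using mx_ge[of "mx q + 1" q] by auto
    have "\<forall>x. count (sh 1 q) x \<le> 1" using d nq unfolding sh_def
      by (intro allI cnt_add_diff) (auto simp: not_in_iff)
    thus "sh 1 q \<in> calH (Suc (Suc n))"
      using q sh_props(1,3,7,8)[OF ne, of 1] by (auto simp: memH dest: rmx_mem)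
    assume "mx (sh 1 q) - 1 \<in># sh 1 q"
    hence "mx q \<in># add_mset (mx q + 1) (q - {#mx q#})" using sh_props(1)[OF ne, of 1] by (simp add: sh_def)
    thus False using c by (simp add: in_diff_count)
  qed
  show "us 1 ` {p \<in> calH (Suc (Suc n)). mx p - 1 \<notin># p} \<subseteq> calH (Suc n)"
  proof safe
    fix p assume p: "p \<in> calH (Suc (Suc n))" "mx p - 1 \<notin># p"
    have ne: "p \<noteq> {#}" and d: "\<forall>x. count p x \<le> 1" using p by (simp_all add: memH)
    note u = us_props[OF ne key(3)[OF p(1)] key(1)[OF p(1)]] key(2)[OF p(1)]
    have "\<forall>x. count (us 1 p) x \<le> 1" using d p(2) unfolding us_def
      by (intro allI cnt_add_diff) (auto simp: not_in_iff)
    thus "us 1 p \<in> calH (Suc n)"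
      using p u by (auto simp: memH)
  qed
qed

lemma H_B2: "bij_betw tp (calH n) {p \<in> calH (Suc (Suc n)). mx p - 1 \<in># p}"
proof (rule bij_betw_byWitness[where f'=rmx])
  show "\<forall>a\<in>calH n. rmx (tp a) = a" by (auto simp: memH tp_props)
  have key: "count p (mx p) = 1" "1 \<le> mx p" if p: "p \<in> calH (Suc (Suc n))" for p
  proof -
    have ne: "p \<noteq> {#}" and o: "\<forall>x. count p x \<le> 1" "\<forall>x\<in>#p. 0 < x" using p by (auto simp: memH)
    show "count p (mx p) = 1" using cnt1[OF o(1) ne] .
    show "1 \<le> mx p" using o(2) mx_in[OF ne] by fastforce
  qed
  show "\<forall>a'\<in>{p \<in> calH (Suc (Suc n)). mx p - 1 \<in># p}. tp (rmx a') = a'"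
  proof
    fix p assume p: "p \<in> {p \<in> calH (Suc (Suc n)). mx p - 1 \<in># p}"
    hence ne: "p \<noteq> {#}" by (simp add: memH)
    show "tp (rmx p) = p" using rm_props(3)[OF ne key(1) _ key(2)] p by simp
  qed
  show "tp ` calH n \<subseteq> {p \<in> calH (Suc (Suc n)). mx p - 1 \<in># p}"
  proof safe
    fix q assume q: "q \<in> calH n"
    hence ne: "q \<noteq> {#}" and d: "\<forall>x. count q x \<le> 1" by (simp_all add: memH)
    have nq: "mx q + 1 \<notin># q" using mx_ge[of "mx q + 1" q] by auto
    have "\<forall>x. count (tp q) x \<le> 1" using d nq unfolding tp_def by (auto simp: not_in_iff)
    thus "tp q \<in> calH (Suc (Suc n))"
      using q tp_props[OF ne] by (auto simp: memH)
    show "mx (tp q) - 1 \<in># tp q" using tp_props(5)[OF ne] .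
  qed
  show "rmx ` {p \<in> calH (Suc (Suc n)). mx p - 1 \<in># p} \<subseteq> calH n"
  proof safe
    fix p assume p: "p \<in> calH (Suc (Suc n))" "mx p - 1 \<in># p"
    have ne: "p \<noteq> {#}" and d: "\<forall>x. count p x \<le> 1" using p by (simp_all add: memH)
    note r = rm_props[OF ne key(1)[OF p(1)] p(2) key(2)[OF p(1)]]
    have "\<forall>x. count (rmx p) x \<le> 1" using d unfolding rmx_def
      by (metis count_diff diff_le_self le_trans)
    moreover have "size p \<ge> 1" using ne size_ge1 by auto
    ultimately show "rmx p \<in> calH n"
      using p r key(2)[OF p(1)] by (auto simp: memH dest: rmx_mem)
  qed
qed




lemma memG1: "p \<in> calG1 M \<longleftrightarrow> p \<noteq> {#} \<and> (\<forall>x\<in>#p. 0<x) \<and> mx p + size p = Suc M \<and> card {x \<in> set_mset p. even x} = 1"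
  by (auto simp: calG1_def memP)

lemma rmx_mem2: "x \<in># p \<Longrightarrow> x \<noteq> mx p \<Longrightarrow> x \<in># rmx p"
  unfolding rmx_def by (simp add: in_diff_count)

lemma E_rmx: "odd (mx q) \<Longrightarrow> {x \<in> set_mset (rmx q). even x} = {x \<in> set_mset q. even x}"
proof (intro set_eqI iffI)
  fix x assume "x \<in> {x \<in> set_mset (rmx q). even x}" thus "x \<in> {x \<in> set_mset q. even x}"
    using rmx_mem by auto
next
  fix x assume o: "odd (mx q)" and x: "x \<in> {x \<in> set_mset q. even x}"
  hence "x \<noteq> mx q" by auto
  thus "x \<in> {x \<in> set_mset (rmx q). even x}" using x rmx_mem2 by auto
qed

lemma card1_E:
  assumes "card {x \<in> set_mset p. even x} = 1" "e \<in># p" "even e" "x \<in># p" "x \<noteq> e" shows "odd x"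
proof
  assume ev: "even x"
  from assms(1) obtain a where a: "{x \<in> set_mset p. even x} = {a}" by (rule card_1_singletonE)
  have "e \<in> {a}" "x \<in> {a}" unfolding a[symmetric] using assms ev by auto
  thus False using assms(5) by simp
qed


lemma G1_C1: "bij_betw am (calG1 (Suc n)) {p \<in> calG1 (Suc (Suc n)). 2 \<le> count p (mx p)}"
proof (rule bij_betw_byWitness[where f'=rmx])
  show "\<forall>a\<in>calG1 (Suc n). rmx (am a) = a" by (auto simp: memG1 addmax)
  show "\<forall>a'\<in>{p \<in> calG1 (Suc (Suc n)). 2 \<le> count p (mx p)}. am (rmx a') = a'"
    by (auto simp: remmax)
  show "am ` calG1 (Suc n) \<subseteq> {p \<in> calG1 (Suc (Suc n)). 2 \<le> count p (mx p)}"
  proof safe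
    fix q assume q: "q \<in> calG1 (Suc n)"
    hence ne: "q \<noteq> {#}" by (simp add: memG1)
    have "mx q \<in># q" using mx_in[OF ne] .
    thus "am q \<in> calG1 (Suc (Suc n))" using q by (auto simp: memG1 addmax[OF ne])
    show "2 \<le> count (am q) (mx (am q))" using \<open>mx q \<in># q\<close>
      by (simp add: addmax[OF ne])
  qed
  show "rmx ` {p \<in> calG1 (Suc (Suc n)). 2 \<le> count p (mx p)} \<subseteq> calG1 (Suc n)"
  proof safe
    fix p assume p: "p \<in> calG1 (Suc (Suc n))" "2 \<le> count p (mx p)"
    have "size p \<ge> 1" using p size_ge1 by (auto simp: memG1)
    thus "rmx p \<in> calG1 (Suc n)" using p by (auto simp: memG1 remmax[OF p(2)] dest: rmx_mem)
  qed
qed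

lemma G1_C2: "bij_betw (sh 1) (calG (Suc n)) {p \<in> calG1 (Suc (Suc n)). count p (mx p) = 1 \<and> even (mx p)}"
proof (rule bij_betw_byWitness[where f'="us 1"])
  show "\<forall>a\<in>calG (Suc n). us 1 (sh 1 a) = a" by (auto simp: memG sh_props)
  have key: "\<And>x. x \<in># rmx p \<Longrightarrow> x + 1 \<le> mx p" "2 \<le> mx p"
    "\<And>x. x \<in># rmx p \<Longrightarrow> odd x"
    if p: "p \<in> calG1 (Suc (Suc n))" "count p (mx p) = 1" "even (mx p)" for p
  proof -
    have ne: "p \<noteq> {#}" and o: "card {x \<in> set_mset p. even x} = 1" "\<forall>x\<in>#p. 0 < x"
      using p by (auto simp: memG1)
    show a: "x + 1 \<le> mx p" if "x \<in># rmx p" for x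
      using count_mx_diff[OF p(2), of x] that unfolding rmx_def by auto
    show "2 \<le> mx p" using o(2) mx_in[OF ne] p(3) by fastforce
    show "odd x" if "x \<in># rmx p" for x
      using count_mx_diff[OF p(2), of x] that card1_E[OF o(1) mx_in[OF ne] p(3), of x]
      unfolding rmx_def by auto
  qed
  show "\<forall>a'\<in>{p \<in> calG1 (Suc (Suc n)). count p (mx p) = 1 \<and> even (mx p)}. sh 1 (us 1 a') = a'"
  proof
    fix p assume p: "p \<in> {p \<in> calG1 (Suc (Suc n)). count p (mx p) = 1 \<and> even (mx p)}"
    hence ne: "p \<noteq> {#}" by (simp add: memG1)
    have "2 \<le> mx p" using key(2) p by simp
    thus "sh 1 (us 1 p) = p" using us_props(5)[OF ne _ key(1)] p by simp
  qed
  show "sh 1 ` calG (Suc n) \<subseteq> {p \<in> calG1 (Suc (Suc n)). count p (mx p) = 1 \<and> even (mx p)}"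
  proof safe
    fix q assume q: "q \<in> calG (Suc n)"
    hence ne: "q \<noteq> {#}" and od: "\<forall>x\<in>#q. odd x" by (simp_all add: memG)
    have om: "odd (mx q)" using od mx_in[OF ne] by auto
    have "{x \<in> set_mset (sh 1 q). even x} = {mx q + 1}"
      using sh_props(7)[OF ne, of 1] od om by (auto dest: rmx_mem)
    thus "sh 1 q \<in> calG1 (Suc (Suc n))"
      using q sh_props(1,3,7,8)[OF ne, of 1] by (auto simp: memG1 memG dest: rmx_mem)
    show "count (sh 1 q) (mx (sh 1 q)) = 1" using sh_props(2)[OF ne] by simp
    show "even (mx (sh 1 q))" using sh_props(1)[OF ne, of 1] om by simp
  qed
  show "us 1 ` {p \<in> calG1 (Suc (Suc n)). count p (mx p) = 1 \<and> even (mx p)} \<subseteq> calG (Suc n)"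
  proof safe
    fix p assume p: "p \<in> calG1 (Suc (Suc n))" "count p (mx p) = 1" "even (mx p)"
    have ne: "p \<noteq> {#}" using p by (simp add: memG1)
    have m2: "2 \<le> mx p" using key(2)[OF p] .
    note u = us_props[OF ne p(2) key(1)[OF p]]
    have "\<forall>x\<in>#us 1 p. odd x" using u(6) m2 key(3)[OF p] rmx_mem2 p(3) by auto
    thus "us 1 p \<in> calG (Suc n)" using p u m2 by (auto simp: memG memG1)
  qed
qed

lemma G1_C3: "bij_betw tp {q \<in> calG1 n. even (mx q)} {p \<in> calG1 (Suc (Suc n)). count p (mx p) = 1 \<and> odd (mx p) \<and> mx p - 1 \<in># p}"
proof (rule bij_betw_byWitness[where f'=rmx])
  show "\<forall>a\<in>{q \<in> calG1 n. even (mx q)}. rmx (tp a) = a" by (auto simp: memG1 tp_props)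
  have key: "1 \<le> mx p" if p: "p \<in> calG1 (Suc (Suc n))" for p
  proof -
    have ne: "p \<noteq> {#}" and o: "\<forall>x\<in>#p. 0 < x" using p by (auto simp: memG1)
    show "1 \<le> mx p" using o mx_in[OF ne] by fastforce
  qed
  show "\<forall>a'\<in>{p \<in> calG1 (Suc (Suc n)). count p (mx p) = 1 \<and> odd (mx p) \<and> mx p - 1 \<in># p}. tp (rmx a') = a'"
  proof
    fix p assume p: "p \<in> {p \<in> calG1 (Suc (Suc n)). count p (mx p) = 1 \<and> odd (mx p) \<and> mx p - 1 \<in># p}"
    hence ne: "p \<noteq> {#}" by (simp add: memG1)
    show "tp (rmx p) = p" using rm_props(3)[OF ne _ _ key] p by simp
  qed
  show "tp ` {q \<in> calG1 n. even (mx q)} \<subseteq> {p \<in> calG1 (Suc (Suc n)). count p (mx p) = 1 \<and> odd (mx p) \<and> mx p - 1 \<in># p}"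
  proof safe
    fix q assume q: "q \<in> calG1 n" "even (mx q)"
    hence ne: "q \<noteq> {#}" by (simp_all add: memG1)
    have "{x \<in> set_mset (tp q). even x} = {x \<in> set_mset q. even x}"
      using tp_props(6)[OF ne] q(2) by auto
    thus "tp q \<in> calG1 (Suc (Suc n))"
      using q tp_props[OF ne] by (auto simp: memG1)
    show "count (tp q) (mx (tp q)) = 1" using tp_props(2)[OF ne] .
    show "even (mx (tp q)) \<Longrightarrow> False" "mx (tp q) - 1 \<in># tp q" using tp_props(1,5)[OF ne] q(2) by auto
  qed
  show "rmx ` {p \<in> calG1 (Suc (Suc n)). count p (mx p) = 1 \<and> odd (mx p) \<and> mx p - 1 \<in># p} \<subseteq> {q \<in> calG1 n. even (mx q)}"
  proof safe
    fix p assume p: "p \<in> calG1 (Suc (Suc n))" "count p (mx p) = 1" "odd (mx p)" "mx p - 1 \<in># p"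
    have ne: "p \<noteq> {#}" using p by (simp_all add: memG1)
    note r = rm_props[OF ne p(2) p(4) key[OF p(1)]]
    have "size p \<ge> 1" using ne size_ge1 by auto
    moreover have "{x \<in> set_mset (rmx p). even x} = {x \<in> set_mset p. even x}" using E_rmx p(3) .
    ultimately show "rmx p \<in> calG1 n"
      using p r key[OF p(1)] by (auto simp: memG1 dest: rmx_mem)
    show "even (mx (rmx p))" using r(2) p(3) key[OF p(1)] by presburger
  qed
qed

lemma G1_C4: "bij_betw (sh 2) {q \<in> calG1 n. odd (mx q)} {p \<in> calG1 (Suc (Suc n)). count p (mx p) = 1 \<and> odd (mx p) \<and> mx p - 1 \<notin># p}"
proof (rule bij_betw_byWitness[where f'="us 2"])
  show "\<forall>a\<in>{q \<in> calG1 n. odd (mx q)}. us 2 (sh 2 a) = a" by (auto simp: memG1 sh_props)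
  have key: "\<And>x. x \<in># rmx p \<Longrightarrow> x + 2 \<le> mx p" "3 \<le> mx p"
    if p: "p \<in> calG1 (Suc (Suc n))" "count p (mx p) = 1" "odd (mx p)" "mx p - 1 \<notin># p" for p
  proof -
    have ne: "p \<noteq> {#}" and o: "card {x \<in> set_mset p. even x} = 1" "\<forall>x\<in>#p. 0 < x"
      using p by (auto simp: memG1)
    show a: "x + 2 \<le> mx p" if "x \<in># rmx p" for x
    proof -
      have "x < mx p" "x \<in># p" using count_mx_diff[OF p(2), of x] that unfolding rmx_def by auto
      moreover hence "x \<noteq> mx p - 1" using p(4) by auto
      ultimately show ?thesis by linarith
    qed
    obtain e where "{x \<in> set_mset p. even x} = {e}" using o(1) by (auto simp: card_1_singleton_iff)
    hence "e \<in># p" "even e" by auto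
    hence "e \<le> mx p" "0 < e" "even e" using mx_ge o(2) by auto
    hence "2 \<le> mx p" by presburger
    thus "3 \<le> mx p" using p(3) by presburger
  qed
  show "\<forall>a'\<in>{p \<in> calG1 (Suc (Suc n)). count p (mx p) = 1 \<and> odd (mx p) \<and> mx p - 1 \<notin># p}. sh 2 (us 2 a') = a'"
  proof
    fix p assume p: "p \<in> {p \<in> calG1 (Suc (Suc n)). count p (mx p) = 1 \<and> odd (mx p) \<and> mx p - 1 \<notin># p}"
    hence ne: "p \<noteq> {#}" by (simp add: memG1)
    have "3 \<le> mx p" using key(2) p by simp
    thus "sh 2 (us 2 p) = p" using us_props(5)[OF ne _ key(1)] p by simp
  qed
  show "sh 2 ` {q \<in> calG1 n. odd (mx q)} \<subseteq> {p \<in> calG1 (Suc (Suc n)). count p (mx p) = 1 \<and> odd (mx p) \<and> mx p - 1 \<notin># p}"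
  proof safe
    fix q assume q: "q \<in> calG1 n" "odd (mx q)"
    hence ne: "q \<noteq> {#}" by (simp add: memG1)
    have "{x \<in> set_mset (sh 2 q). even x} = {x \<in> set_mset (rmx q). even x}"
      using sh_props(7)[OF ne, of 2] q(2) by auto
    also have "\<dots> = {x \<in> set_mset q. even x}" using E_rmx q(2) .
    finally have "{x \<in> set_mset (sh 2 q). even x} = {x \<in> set_mset q. even x}" .
    thus "sh 2 q \<in> calG1 (Suc (Suc n))"
      using q sh_props(1,3,7,8)[OF ne, of 2] by (auto simp: memG1 dest: rmx_mem)
    show "count (sh 2 q) (mx (sh 2 q)) = 1" using sh_props(2)[OF ne] by simp
    show "even (mx (sh 2 q)) \<Longrightarrow> False" using sh_props(1)[OF ne, of 2] q(2) by simp
    assume "mx (sh 2 q) - 1 \<in># sh 2 q"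
    hence "mx q + 1 \<in># sh 2 q" using sh_props(1)[OF ne, of 2] by simp
    hence "mx q + 1 \<in># rmx q" using sh_props(7)[OF ne, of 2] by auto
    thus False using sh_props(9)[OF ne, of 2] by fastforce
  qed
  show "us 2 ` {p \<in> calG1 (Suc (Suc n)). count p (mx p) = 1 \<and> odd (mx p) \<and> mx p - 1 \<notin># p} \<subseteq> {q \<in> calG1 n. odd (mx q)}"
  proof safe
    fix p assume p: "p \<in> calG1 (Suc (Suc n))" "count p (mx p) = 1" "odd (mx p)" "mx p - 1 \<notin># p"
    have ne: "p \<noteq> {#}" using p by (simp add: memG1)
    have m3: "3 \<le> mx p" using key(2)[OF p] .
    note u = us_props[OF ne p(2) key(1)[OF p]]
    have oo: "odd (mx p - 2)" using m3 p(3) by presburger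
    have "{x \<in> set_mset (us 2 p). even x} = {x \<in> set_mset p. even x}"
      using u(6) m3 oo p(3) by auto
    thus "us 2 p \<in> calG1 n" using p u m3 by (auto simp: memG1)
    show "even (mx (us 2 p)) \<Longrightarrow> False" using u(1) m3 oo by simp
  qed
qed




lemma memH1: "p \<in> calH1 M \<longleftrightarrow> p \<noteq> {#} \<and> (\<forall>x\<in>#p. 0<x) \<and> mx p + size p = Suc M \<and> card {x. 2 \<le> count p x} = 1"
  by (auto simp: calH1_def memP)

lemma R_eq: "(\<And>x. 2 \<le> count a x \<longleftrightarrow> 2 \<le> count b x) \<Longrightarrow> {x. 2 \<le> count a x} = {x. 2 \<le> count b x}"
  by auto

lemma cnt_am: "count (am q) x = count q x + (if x = mx q then 1 else 0)" by (simp add: am_def)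
lemma cnt_rmx: "count (rmx q) x = count q x - (if x = mx q then 1 else 0)" by (simp add: rmx_def)
lemma cnt_sh: "count (sh k q) x = (if x = mx q + k then 1 else 0) + (count q x - (if x = mx q then 1 else 0))"
  by (simp add: sh_def)
lemma cnt_us: "count (us k q) x = (if x = mx q - k then 1 else 0) + (count q x - (if x = mx q then 1 else 0))"
  by (simp add: us_def)
lemma cnt_tp: "count (tp q) x = count q x + (if x = mx q + 1 then 1 else 0)" by (simp add: tp_def)

lemma cnt_pos: "p \<noteq> {#} \<Longrightarrow> 1 \<le> count p (mx p)"
  using mx_in[of p] by (simp add: Suc_le_eq)

lemma R_single: "card {x. 2 \<le> count p x} = 1 \<Longrightarrow> 2 \<le> count p a \<Longrightarrow> x \<noteq> a \<Longrightarrow> count p x \<le> 1"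
proof (rule ccontr)
  assume c: "card {x. 2 \<le> count p x} = 1" "2 \<le> count p a" "x \<noteq> a" "\<not> count p x \<le> 1"
  from c(1) obtain b where b: "{x. 2 \<le> count p x} = {b}" by (rule card_1_singletonE)
  have "a \<in> {b}" "x \<in> {b}" unfolding b[symmetric] using c by auto
  thus False using c(3) by simp
qed

lemma H1_D1: "bij_betw am {q \<in> calH1 (Suc n). 2 \<le> count q (mx q)} {p \<in> calH1 (Suc (Suc n)). 3 \<le> count p (mx p)}"
proof (rule bij_betw_byWitness[where f'=rmx])
  show "\<forall>a\<in>{q \<in> calH1 (Suc n). 2 \<le> count q (mx q)}. rmx (am a) = a" by (auto simp: memH1 addmax)
  show "\<forall>a'\<in>{p \<in> calH1 (Suc (Suc n)). 3 \<le> count p (mx p)}. am (rmx a') = a'"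
    by (auto simp: remmax)
  show "am ` {q \<in> calH1 (Suc n). 2 \<le> count q (mx q)} \<subseteq> {p \<in> calH1 (Suc (Suc n)). 3 \<le> count p (mx p)}"
  proof safe
    fix q assume q: "q \<in> calH1 (Suc n)" "2 \<le> count q (mx q)"
    hence ne: "q \<noteq> {#}" by (simp add: memH1)
    have "mx q \<in># q" using mx_in[OF ne] .
    moreover have "{x. 2 \<le> count (am q) x} = {x. 2 \<le> count q x}"
      using q(2) mx_in[OF ne] by (intro R_eq) (auto simp: cnt_am)
    ultimately show "am q \<in> calH1 (Suc (Suc n))" using q by (auto simp: memH1 addmax[OF ne])
    show "3 \<le> count (am q) (mx (am q))" using q(2) by (simp add: addmax[OF ne])
  qed
  show "rmx ` {p \<in> calH1 (Suc (Suc n)). 3 \<le> count p (mx p)} \<subseteq> {q \<in> calH1 (Suc n). 2 \<le> count q (mx q)}"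
  proof safe
    fix p assume p: "p \<in> calH1 (Suc (Suc n))" "3 \<le> count p (mx p)"
    have p2: "2 \<le> count p (mx p)" using p(2) by simp
    have "size p \<ge> 1" using p size_ge1 by (auto simp: memH1)
    moreover have "{x. 2 \<le> count (rmx p) x} = {x. 2 \<le> count p x}"
      using p(2) by (intro R_eq) (auto simp: cnt_rmx)
    ultimately show "rmx p \<in> calH1 (Suc n)" using p by (auto simp: memH1 remmax[OF p2] dest: rmx_mem)
    show "2 \<le> count (rmx p) (mx (rmx p))" using p(2) by (simp add: remmax[OF p2])
  qed
qed

lemma H1_D2: "bij_betw am (calH (Suc n)) {p \<in> calH1 (Suc (Suc n)). count p (mx p) = 2}"
proof (rule bij_betw_byWitness[where f'=rmx])
  show "\<forall>a\<in>calH (Suc n). rmx (am a) = a" by (auto simp: memH addmax)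
  show "\<forall>a'\<in>{p \<in> calH1 (Suc (Suc n)). count p (mx p) = 2}. am (rmx a') = a'"
    by (auto simp: remmax)
  show "am ` calH (Suc n) \<subseteq> {p \<in> calH1 (Suc (Suc n)). count p (mx p) = 2}"
  proof safe
    fix q assume q: "q \<in> calH (Suc n)"
    hence ne: "q \<noteq> {#}" and d: "\<forall>x. count q x \<le> 1" by (simp_all add: memH)
    have c: "count q (mx q) = 1" using cnt1[OF d ne] .
    have "{x. 2 \<le> count (am q) x} = {mx q}"
      using c d by (auto simp: cnt_am) (metis not_less_eq_eq numeral_2_eq_2)
    thus "am q \<in> calH1 (Suc (Suc n))" using q mx_in[OF ne] by (auto simp: memH1 memH addmax[OF ne])
    show "count (am q) (mx (am q)) = 2" using c by (simp add: addmax[OF ne])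
  qed
  show "rmx ` {p \<in> calH1 (Suc (Suc n)). count p (mx p) = 2} \<subseteq> calH (Suc n)"
  proof safe
    fix p assume p: "p \<in> calH1 (Suc (Suc n))" "count p (mx p) = 2"
    have p2: "2 \<le> count p (mx p)" using p(2) by simp
    have r: "card {x. 2 \<le> count p x} = 1" using p by (simp add: memH1)
    have "size p \<ge> 1" using p size_ge1 by (auto simp: memH1)
    moreover have "\<forall>x. count (rmx p) x \<le> 1"
    proof
      fix x show "count (rmx p) x \<le> 1"
        using R_single[OF r p2, of x] p(2) by (cases "x = mx p") (auto simp: cnt_rmx)
    qed
    ultimately show "rmx p \<in> calH (Suc n)" using p by (auto simp: memH memH1 remmax[OF p2] dest: rmx_mem)
  qed
qed

lemma H1_D3: "bij_betw (sh 1) {q \<in> calH1 (Suc n). count q (mx q) = 1} {p \<in> calH1 (Suc (Suc n)). count p (mx p) = 1 \<and> mx p - 1 \<notin># p}"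
proof (rule bij_betw_byWitness[where f'="us 1"])
  show "\<forall>a\<in>{q \<in> calH1 (Suc n). count q (mx q) = 1}. us 1 (sh 1 a) = a" by (auto simp: memH1 sh_props)
  have key: "\<And>x. x \<in># rmx p \<Longrightarrow> x + 1 \<le> mx p" "2 \<le> mx p"
    if p: "p \<in> calH1 (Suc (Suc n))" "count p (mx p) = 1" for p
  proof -
    have ne: "p \<noteq> {#}" and o: "card {x. 2 \<le> count p x} = 1" "\<forall>x\<in>#p. 0 < x"
      using p by (auto simp: memH1)
    show a: "x + 1 \<le> mx p" if "x \<in># rmx p" for x
      using count_mx_diff[OF p(2), of x] that unfolding rmx_def by auto
    obtain e where "{x. 2 \<le> count p x} = {e}" using o(1) by (rule card_1_singletonE)
    hence e: "2 \<le> count p e" by auto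
    hence "e \<noteq> mx p" using p(2) by auto
    moreover have "0 < count p e" using e by linarith
    hence "e \<in># p" by simp
    ultimately have "e < mx p" "0 < e" using mx_ge[of e p] o(2) by auto
    thus "2 \<le> mx p" by simp
  qed
  show "\<forall>a'\<in>{p \<in> calH1 (Suc (Suc n)). count p (mx p) = 1 \<and> mx p - 1 \<notin># p}. sh 1 (us 1 a') = a'"
  proof
    fix p assume p: "p \<in> {p \<in> calH1 (Suc (Suc n)). count p (mx p) = 1 \<and> mx p - 1 \<notin># p}"
    hence ne: "p \<noteq> {#}" by (simp add: memH1)
    have "2 \<le> mx p" using key(2) p by simp
    thus "sh 1 (us 1 p) = p" using us_props(5)[OF ne _ key(1)] p by simp
  qed
  show "sh 1 ` {q \<in> calH1 (Suc n). count q (mx q) = 1} \<subseteq> {p \<in> calH1 (Suc (Suc n)). count p (mx p) = 1 \<and> mx p - 1 \<notin># p}"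
  proof safe
    fix q assume q: "q \<in> calH1 (Suc n)" "count q (mx q) = 1"
    hence ne: "q \<noteq> {#}" by (simp add: memH1)
    have "mx q + 1 \<notin># q" using mx_ge[of "mx q + 1" q] by auto
    hence nq: "count q (mx q + 1) = 0" by (simp add: not_in_iff)
    have "{x. 2 \<le> count (sh 1 q) x} = {x. 2 \<le> count q x}"
      using q(2) nq by (intro R_eq) (auto simp: cnt_sh)
    thus "sh 1 q \<in> calH1 (Suc (Suc n))"
      using q sh_props(1,3,7,8)[OF ne, of 1] by (auto simp: memH1 dest: rmx_mem)
    show "count (sh 1 q) (mx (sh 1 q)) = 1" using sh_props(2)[OF ne] by simp
    assume "mx (sh 1 q) - 1 \<in># sh 1 q"
    hence "0 < count (sh 1 q) (mx q)" using sh_props(1)[OF ne, of 1] by simp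
    thus False using q(2) by (simp add: cnt_sh)
  qed
  show "us 1 ` {p \<in> calH1 (Suc (Suc n)). count p (mx p) = 1 \<and> mx p - 1 \<notin># p} \<subseteq> {q \<in> calH1 (Suc n). count q (mx q) = 1}"
  proof safe
    fix p assume p: "p \<in> calH1 (Suc (Suc n))" "count p (mx p) = 1" "mx p - 1 \<notin># p"
    have ne: "p \<noteq> {#}" using p by (simp add: memH1)
    have m2: "2 \<le> mx p" using key(2)[OF p(1,2)] .
    note u = us_props[OF ne p(2) key(1)[OF p(1,2)]]
    have np: "count p (mx p - 1) = 0" using p(3) by (simp add: not_in_iff)
    have "{x. 2 \<le> count (us 1 p) x} = {x. 2 \<le> count p x}"
      using p(2) np by (intro R_eq) (auto simp: cnt_us)
    thus "us 1 p \<in> calH1 (Suc n)" using p u m2 by (auto simp: memH1)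
    show "count (us 1 p) (mx (us 1 p)) = 1" using u(1) m2 np by (simp add: cnt_us)
  qed
qed

lemma H1_D4: "bij_betw tp (calH1 n) {p \<in> calH1 (Suc (Suc n)). count p (mx p) = 1 \<and> mx p - 1 \<in># p}"
proof (rule bij_betw_byWitness[where f'=rmx])
  show "\<forall>a\<in>calH1 n. rmx (tp a) = a" by (auto simp: memH1 tp_props)
  have key: "1 \<le> mx p" if p: "p \<in> calH1 (Suc (Suc n))" for p
  proof -
    have ne: "p \<noteq> {#}" and o: "\<forall>x\<in>#p. 0 < x" using p by (auto simp: memH1)
    show "1 \<le> mx p" using o mx_in[OF ne] by fastforce
  qed
  show "\<forall>a'\<in>{p \<in> calH1 (Suc (Suc n)). count p (mx p) = 1 \<and> mx p - 1 \<in># p}. tp (rmx a') = a'"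
  proof
    fix p assume p: "p \<in> {p \<in> calH1 (Suc (Suc n)). count p (mx p) = 1 \<and> mx p - 1 \<in># p}"
    hence ne: "p \<noteq> {#}" by (simp add: memH1)
    show "tp (rmx p) = p" using rm_props(3)[OF ne _ _ key] p by simp
  qed
  show "tp ` calH1 n \<subseteq> {p \<in> calH1 (Suc (Suc n)). count p (mx p) = 1 \<and> mx p - 1 \<in># p}"
  proof safe
    fix q assume q: "q \<in> calH1 n"
    hence ne: "q \<noteq> {#}" by (simp_all add: memH1)
    have "mx q + 1 \<notin># q" using mx_ge[of "mx q + 1" q] by auto
    hence nq: "count q (mx q + 1) = 0" by (simp add: not_in_iff)
    have "{x. 2 \<le> count (tp q) x} = {x. 2 \<le> count q x}"
      using nq by (intro R_eq) (auto simp: cnt_tp)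
    thus "tp q \<in> calH1 (Suc (Suc n))"
      using q tp_props[OF ne] by (auto simp: memH1)
    show "count (tp q) (mx (tp q)) = 1" using tp_props(2)[OF ne] .
    show "mx (tp q) - 1 \<in># tp q" using tp_props(5)[OF ne] .
  qed
  show "rmx ` {p \<in> calH1 (Suc (Suc n)). count p (mx p) = 1 \<and> mx p - 1 \<in># p} \<subseteq> calH1 n"
  proof safe
    fix p assume p: "p \<in> calH1 (Suc (Suc n))" "count p (mx p) = 1" "mx p - 1 \<in># p"
    have ne: "p \<noteq> {#}" using p by (simp_all add: memH1)
    note r = rm_props[OF ne p(2) p(3) key[OF p(1)]]
    have "size p \<ge> 1" using ne size_ge1 by auto
    moreover have "{x. 2 \<le> count (rmx p) x} = {x. 2 \<le> count p x}"
      using p(2) by (intro R_eq) (auto simp: cnt_rmx)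
    ultimately show "rmx p \<in> calH1 n"
      using p r key[OF p(1)] by (auto simp: memH1 dest: rmx_mem)
  qed
qed




lemma fin_sub: "X \<subseteq> partitions_per M \<Longrightarrow> finite X"
  using finite_partitions_per finite_subset by blast

lemma finG: "finite (calG M)" and finH: "finite (calH M)" and finG1: "finite (calG1 M)" and finH1: "finite (calH1 M)"
  by (auto intro!: fin_sub simp: calG_def calH_def calG1_def calH1_def)

lemma finS: "finite {p \<in> calG M. P p}" "finite {p \<in> calH M. P p}" "finite {p \<in> calG1 M. P p}" "finite {p \<in> calH1 M. P p}"
  using finG finH finG1 finH1 by auto

lemma sum_plus1: "(\<Sum>q\<in>A. f q + (1::nat)) = sum f A + card A"
  by (subst sum.distrib) simp

lemma split2: "X = {p \<in> X. P p} \<union> {p \<in> X. \<not> P p}" by auto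

lemma bij_sum: "bij_betw f A B \<Longrightarrow> sum w B = sum (\<lambda>x. w (f x)) A"
  by (simp add: sum.reindex_bij_betw)

lemma card4: "finite A \<Longrightarrow> finite B \<Longrightarrow> finite C \<Longrightarrow> finite D \<Longrightarrow> A \<inter> B = {} \<Longrightarrow> A \<inter> C = {} \<Longrightarrow> A \<inter> D = {}
  \<Longrightarrow> B \<inter> C = {} \<Longrightarrow> B \<inter> D = {} \<Longrightarrow> C \<inter> D = {} \<Longrightarrow> card (A \<union> (B \<union> (C \<union> D))) = card A + card B + card C + card D"
  by (simp add: card_Un_disjoint Int_Un_distrib)

lemma card_split: "finite X \<Longrightarrow> card {p \<in> X. P p} + card {p \<in> X. \<not> P p} = card X"
  by (subst card_Un_disjoint[symmetric]) (auto intro: arg_cong[where f=card])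

lemma cnt_cases3: "p \<noteq> {#} \<Longrightarrow> 3 \<le> count p (mx p) \<or> count p (mx p) = 2 \<or> count p (mx p) = 1"
  using cnt_pos[of p] by linarith

lemma cnt_cases: "p \<noteq> {#} \<Longrightarrow> 2 \<le> count p (mx p) \<or> count p (mx p) = 1"
  using cnt_pos[of p] by linarith

lemma recG: "card (calG (Suc (Suc n))) = card (calG (Suc n)) + card (calG n)"
  and recg: "g (Suc (Suc n)) = g (Suc n) + card (calG (Suc n)) + g n"
proof -
  let ?X = "calG (Suc (Suc n))"
  let ?A = "{p \<in> ?X. 2 \<le> count p (mx p)}" and ?B = "{p \<in> ?X. count p (mx p) = 1}"
  have U: "?X = ?A \<union> ?B"
  proof (rule set_eqI)
    fix x show "x \<in> ?X \<longleftrightarrow> x \<in> ?A \<union> ?B" using cnt_cases[of x] by (auto simp: memG)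
  qed
  have D: "?A \<inter> ?B = {}" by auto
  have fA: "finite ?A" and fB: "finite ?B" using finS by auto
  show "card ?X = card (calG (Suc n)) + card (calG n)"
    apply (subst U)
    using card_Un_disjoint[OF fA fB D] bij_betw_same_card[OF G_A1] bij_betw_same_card[OF G_A2]
    by simp
  have "sum size ?A = (\<Sum>q\<in>calG (Suc n). size q + 1)"
    unfolding bij_sum[OF G_A1] by (intro sum.cong) (auto simp: memG addmax)
  hence sA: "sum size ?A = g (Suc n) + card (calG (Suc n))"
    by (simp only: sum_plus1 g_def)
  have sB: "sum size ?B = g n"
    unfolding bij_sum[OF G_A2] g_def
    by (intro sum.cong) (auto simp: memG sh_props)
  show "g (Suc (Suc n)) = g (Suc n) + card (calG (Suc n)) + g n"
    unfolding g_def[of "Suc (Suc n)"] apply (subst U) unfolding sum.union_disjoint[OF fA fB D] sA sB by simp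
qed

lemma recH: "card (calH (Suc (Suc n))) = card (calH (Suc n)) + card (calH n)"
  and rech: "h (Suc (Suc n)) = h (Suc n) + card (calH n) + h n"
proof -
  let ?X = "calH (Suc (Suc n))"
  let ?A = "{p \<in> ?X. mx p - 1 \<notin># p}" and ?B = "{p \<in> ?X. mx p - 1 \<in># p}"
  have U: "?X = ?A \<union> ?B" by auto
  have D: "?A \<inter> ?B = {}" by auto
  have fA: "finite ?A" and fB: "finite ?B" using finS by auto
  show "card ?X = card (calH (Suc n)) + card (calH n)"
    apply (subst U)
    using card_Un_disjoint[OF fA fB D] bij_betw_same_card[OF H_B1] bij_betw_same_card[OF H_B2]
    by simp
  have sA: "sum size ?A = h (Suc n)"
    unfolding bij_sum[OF H_B1] h_def
    by (intro sum.cong) (auto simp: memH sh_props)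
  have "sum size ?B = (\<Sum>q\<in>calH n. size q + 1)"
    unfolding bij_sum[OF H_B2] by (intro sum.cong) (auto simp: memH tp_props)
  hence sB: "sum size ?B = h n + card (calH n)"
    by (simp only: sum_plus1 h_def)
  show "h (Suc (Suc n)) = h (Suc n) + card (calH n) + h n"
    unfolding h_def[of "Suc (Suc n)"] apply (subst U) unfolding sum.union_disjoint[OF fA fB D] sA sB by simp
qed

lemma recG1: "card (calG1 (Suc (Suc n))) = card (calG1 (Suc n)) + card (calG (Suc n)) + card (calG1 n)"
proof -
  let ?X = "calG1 (Suc (Suc n))"
  let ?A = "{p \<in> ?X. 2 \<le> count p (mx p)}"
  let ?B = "{p \<in> ?X. count p (mx p) = 1 \<and> even (mx p)}"
  let ?C = "{p \<in> ?X. count p (mx p) = 1 \<and> odd (mx p) \<and> mx p - 1 \<in># p}"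
  let ?D = "{p \<in> ?X. count p (mx p) = 1 \<and> odd (mx p) \<and> mx p - 1 \<notin># p}"
  have U: "?X = ?A \<union> (?B \<union> (?C \<union> ?D))"
  proof (rule set_eqI)
    fix x show "x \<in> ?X \<longleftrightarrow> x \<in> ?A \<union> (?B \<union> (?C \<union> ?D))" using cnt_cases[of x] by (auto simp: memG1)
  qed
  have f: "finite ?A" "finite ?B" "finite ?C" "finite ?D" using finS by auto
  have "card ?X = card ?A + (card ?B + (card ?C + card ?D))"
    by (subst U, subst card4[OF f]) auto
  also have "\<dots> = card (calG1 (Suc n)) + card (calG (Suc n)) + (card {q \<in> calG1 n. even (mx q)} + card {q \<in> calG1 n. odd (mx q)})"
    using bij_betw_same_card[OF G1_C1] bij_betw_same_card[OF G1_C2] bij_betw_same_card[OF G1_C3]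
      bij_betw_same_card[OF G1_C4] by simp
  also have "card {q \<in> calG1 n. even (mx q)} + card {q \<in> calG1 n. odd (mx q)} = card (calG1 n)"
    using card_split[OF finG1, of n "\<lambda>q. even (mx q)"] by simp
  finally show ?thesis by simp
qed

lemma recH1: "card (calH1 (Suc (Suc n))) = card (calH1 (Suc n)) + card (calH (Suc n)) + card (calH1 n)"
proof -
  let ?X = "calH1 (Suc (Suc n))"
  let ?A = "{p \<in> ?X. 3 \<le> count p (mx p)}"
  let ?B = "{p \<in> ?X. count p (mx p) = 2}"
  let ?C = "{p \<in> ?X. count p (mx p) = 1 \<and> mx p - 1 \<notin># p}"
  let ?D = "{p \<in> ?X. count p (mx p) = 1 \<and> mx p - 1 \<in># p}"
  have U: "?X = ?A \<union> (?B \<union> (?C \<union> ?D))"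
  proof (rule set_eqI)
    fix x show "x \<in> ?X \<longleftrightarrow> x \<in> ?A \<union> (?B \<union> (?C \<union> ?D))" using cnt_cases3[of x] by (auto simp: memH1)
  qed
  have f: "finite ?A" "finite ?B" "finite ?C" "finite ?D" using finS by auto
  have "card ?X = card ?A + (card ?B + (card ?C + card ?D))"
    by (subst U, subst card4[OF f]) auto
  also have "\<dots> = (card {q \<in> calH1 (Suc n). 2 \<le> count q (mx q)} + card {q \<in> calH1 (Suc n). count q (mx q) = 1}) + card (calH (Suc n)) + card (calH1 n)"
    using bij_betw_same_card[OF H1_D1] bij_betw_same_card[OF H1_D2] bij_betw_same_card[OF H1_D3]
      bij_betw_same_card[OF H1_D4] by simp
  also have "card {q \<in> calH1 (Suc n). 2 \<le> count q (mx q)} + card {q \<in> calH1 (Suc n). count q (mx q) = 1} = card (calH1 (Suc n))"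
  proof -
    have "{q \<in> calH1 (Suc n). count q (mx q) = 1} = {q \<in> calH1 (Suc n). \<not> 2 \<le> count q (mx q)}"
    proof (rule set_eqI)
      fix x show "x \<in> {q \<in> calH1 (Suc n). count q (mx q) = 1} \<longleftrightarrow> x \<in> {q \<in> calH1 (Suc n). \<not> 2 \<le> count q (mx q)}"
        using cnt_cases[of x] by (auto simp: memH1)
    qed
    thus ?thesis using card_split[OF finH1, of "Suc n" "\<lambda>q. 2 \<le> count q (mx q)"] by simp
  qed
  finally show ?thesis by simp
qed




lemma pp0: "partitions_per 0 = {}"
proof -
  { fix p assume "p \<in> partitions_per 0"
    hence p: "p \<noteq> {#}" "\<forall>x\<in>#p. 0 < x" "mx p + size p = 1" by (auto simp: memP)
    have "mx p \<in># p" using mx_in[OF p(1)] .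
    hence "mx p > 0" using p(2) by blast
    moreover have "size p \<ge> 1" using size_ge1[OF p(1)] .
    ultimately have False using p(3) by linarith }
  thus ?thesis by blast
qed

lemma pp1: "partitions_per 1 = {{#1#}}"
proof -
  have m1: "mx {#1#} = 1" by (rule mx_eqI) auto
  { fix p assume "p \<in> partitions_per 1"
    hence p: "p \<noteq> {#}" "\<forall>x\<in>#p. 0 < x" "mx p + size p = 2" by (auto simp: memP)
    have "mx p \<in># p" using mx_in[OF p(1)] .
    hence "mx p > 0" using p(2) by blast
    moreover have "size p \<ge> 1" using size_ge1[OF p(1)] .
    ultimately have s: "size p = 1" and m: "mx p = 1" using p(3) by linarith+
    obtain a where a: "p = {#a#}" using size_1_singleton_mset[OF s] by blast
    have "mx {#a#} = a" by (rule mx_eqI) auto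
    hence "p = {#1#}" using a m by simp }
  moreover have "{#1#} \<in> partitions_per 1" using m1 by (simp add: memP)
  ultimately show ?thesis by blast
qed

lemma base0: "calG 0 = {}" "calH 0 = {}" "calG1 0 = {}" "calH1 0 = {}"
  unfolding calG_def calH_def calG1_def calH1_def pp0 by simp_all

lemma base1: "calG 1 = {{#1#}}" "calH 1 = {{#1#}}" "calG1 1 = {}" "calH1 1 = {}"
proof -
  have e1: "{x \<in> set_mset {#1::nat#}. even x} = {}" by simp
  have e2: "{x. 2 \<le> count {#1::nat#} x} = {}" by simp
  show "calG 1 = {{#1#}}" "calH 1 = {{#1#}}" unfolding calG_def calH_def pp1 by auto
  have "card {x \<in> set_mset {#1::nat#}. even x} = 0" unfolding e1 by simp
  have e3: "{x. x = Suc 0 \<and> even x} = {}" by auto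
  show "calG1 1 = {}" unfolding calG1_def pp1 by (auto simp: e3)
  have "card {x. 2 \<le> count {#1::nat#} x} = 0" unfolding e2 by simp
  thus "calH1 1 = {}" unfolding calH1_def pp1 by simp
qed

lemma base1': "calG (Suc 0) = {{#1#}}" "calH (Suc 0) = {{#1#}}" "calG1 (Suc 0) = {}" "calH1 (Suc 0) = {}"
  using base1 by simp_all

lemma g1_card: "g1 n = card (calG1 n)" by (simp add: g1_def base0)
lemma h1_card: "h1 n = card (calH1 n)" by (simp add: h1_def base0)

lemma rec_fps:
  fixes s t :: "nat \<Rightarrow> rat"
  assumes "\<And>n. s (Suc (Suc n)) = s (Suc n) + s n + t n"
  shows "Abs_fps s * (1 - fps_X - fps_X^2) = Abs_fps (\<lambda>n. if n = 0 then s 0 else if n = 1 then s 1 - s 0 else t (n-2))"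
proof (rule fps_ext)
  fix n
  have e: "Abs_fps s * (1 - fps_X - fps_X^2) = Abs_fps s - fps_X * Abs_fps s - fps_X^2 * Abs_fps s"
    by (simp add: algebra_simps)
  show "fps_nth (Abs_fps s * (1 - fps_X - fps_X^2)) n = fps_nth (Abs_fps (\<lambda>n. if n = 0 then s 0 else if n = 1 then s 1 - s 0 else t (n-2))) n"
  proof -
    consider "n = 0" | "n = 1" | k where "n = Suc (Suc k)" by (cases n; cases "n - 1") auto
    thus ?thesis
    proof cases
      case 1 thus ?thesis unfolding e by (simp add: fps_X_power_mult_nth)
    next
      case 2 thus ?thesis unfolding e by (simp add: fps_X_power_mult_nth)
    next
      case (3 k) thus ?thesis unfolding e using assms[of k] by (simp add: fps_X_power_mult_nth)
    qed
  qed
qed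

abbreviation "FD \<equiv> (1 - fps_X - fps_X^2 :: rat fps)"
definition "FG = Abs_fps (\<lambda>n. of_nat (card (calG n)) :: rat)"
definition "FH = Abs_fps (\<lambda>n. of_nat (card (calH n)) :: rat)"
definition "Fg1 = Abs_fps (\<lambda>n. of_nat (g1 n) :: rat)"
definition "Fh1 = Abs_fps (\<lambda>n. of_nat (h1 n) :: rat)"
definition "Fg = Abs_fps (\<lambda>n. of_nat (g n) :: rat)"
definition "Fh = Abs_fps (\<lambda>n. of_nat (h n) :: rat)"

lemma g0: "g 0 = 0" "h 0 = 0" by (simp_all add: g_def h_def base0)
lemma g1v: "g 1 = 1" "h 1 = 1" "g (Suc 0) = 1" "h (Suc 0) = 1" by (simp_all add: g_def h_def base1 base1')

lemma FG_eq: "FG * FD = fps_X"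
proof -
  have "FG * FD = Abs_fps (\<lambda>n. if n = 0 then of_nat (card (calG 0)) else if n = 1 then of_nat (card (calG 1)) - of_nat (card (calG 0)) else (0::rat))"
    unfolding FG_def by (rule rec_fps) (simp add: recG)
  also have "\<dots> = fps_X" by (rule fps_ext) (simp add: base0 base1 base1')
  finally show ?thesis .
qed

lemma FH_eq: "FH * FD = fps_X"
proof -
  have "FH * FD = Abs_fps (\<lambda>n. if n = 0 then of_nat (card (calH 0)) else if n = 1 then of_nat (card (calH 1)) - of_nat (card (calH 0)) else (0::rat))"
    unfolding FH_def by (rule rec_fps) (simp add: recH)
  also have "\<dots> = fps_X" by (rule fps_ext) (simp add: base0 base1 base1')
  finally show ?thesis .
qed

lemma Fg1_eq: "Fg1 * FD = fps_X * FG"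
proof -
  have "Fg1 * FD = Abs_fps (\<lambda>n. if n = 0 then of_nat (g1 0) else if n = 1 then of_nat (g1 1) - of_nat (g1 0) else (of_nat (card (calG (Suc (n-2)))) :: rat))"
    unfolding Fg1_def by (rule rec_fps) (simp add: recG1 g1_card)
  also have "\<dots> = fps_X * FG" unfolding FG_def
    by (rule fps_ext) (auto simp: base0 base1 base1' g1_card Suc_diff_Suc numeral_2_eq_2)
  finally show ?thesis .
qed

lemma Fh1_eq: "Fh1 * FD = fps_X * FH"
proof -
  have "Fh1 * FD = Abs_fps (\<lambda>n. if n = 0 then of_nat (h1 0) else if n = 1 then of_nat (h1 1) - of_nat (h1 0) else (of_nat (card (calH (Suc (n-2)))) :: rat))"
    unfolding Fh1_def by (rule rec_fps) (simp add: recH1 h1_card)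
  also have "\<dots> = fps_X * FH" unfolding FH_def
    by (rule fps_ext) (auto simp: base0 base1 base1' h1_card Suc_diff_Suc numeral_2_eq_2)
  finally show ?thesis .
qed

lemma Fg_eq: "Fg * FD = fps_X * FG + fps_X"
proof -
  have "Fg * FD = Abs_fps (\<lambda>n. if n = 0 then of_nat (g 0) else if n = 1 then of_nat (g 1) - of_nat (g 0) else (of_nat (card (calG (Suc (n-2)))) :: rat))"
    unfolding Fg_def by (rule rec_fps) (simp add: recg)
  also have "\<dots> = fps_X * FG + fps_X" unfolding FG_def
    by (rule fps_ext) (auto simp: base0 base1 base1' g0 g1v Suc_diff_Suc numeral_2_eq_2)
  finally show ?thesis .
qed

lemma Fh_eq: "Fh * FD = fps_X^2 * FH + fps_X"
proof -
  have "Fh * FD = Abs_fps (\<lambda>n. if n = 0 then of_nat (h 0) else if n = 1 then of_nat (h 1) - of_nat (h 0) else (of_nat (card (calH (n-2))) :: rat))"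
    unfolding Fh_def by (rule rec_fps) (simp add: rech)
  also have "\<dots> = fps_X^2 * FH + fps_X" unfolding FH_def
    by (rule fps_ext) (auto simp: base0 base1 base1' g0 g1v fps_X_power_mult_nth)
  finally show ?thesis .
qed

lemma FD_nz: "FD \<noteq> 0"
proof
  assume "FD = 0" hence "fps_nth FD 0 = 0" by simp
  thus False by simp
qed

lemma FG_FH: "FG = FH"
proof -
  have "(FG - FH) * FD = FG * FD - FH * FD" by (rule left_diff_distrib)
  hence "(FG - FH) * FD = 0" using FG_eq FH_eq by simp
  hence "FG - FH = 0" using FD_nz by simp
  thus ?thesis by simp
qed

lemma div_lemma: "A * FD^2 = fps_X^2 - fps_X^3 \<Longrightarrow> A = (fps_X^2 - fps_X^3) / FD^2"
proof -
  assume a: "A * FD^2 = fps_X^2 - fps_X^3"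
  have "FD^2 \<noteq> 0" using FD_nz by simp
  hence "(A * FD^2) / FD^2 = A" by (rule fps_divide_times_eq)
  thus ?thesis using a by simp
qed

lemma part1: "Abs_fps (\<lambda>M. if M = 0 then 0 else of_int (int (g1 M) - int (g1 (M - 1))) :: rat)
           = (fps_X ^ 2 - fps_X ^ 3) / (1 - fps_X - fps_X ^ 2) ^ 2"
proof (rule div_lemma)
  let ?L = "Abs_fps (\<lambda>M. if M = 0 then 0 else of_int (int (g1 M) - int (g1 (M - 1))) :: rat)"
  have "?L = (1 - fps_X) * Fg1"
  proof (rule fps_ext)
    fix n
    have e: "(1 - fps_X) * Fg1 = Fg1 - fps_X * Fg1" by (simp add: algebra_simps)
    show "fps_nth ?L n = fps_nth ((1 - fps_X) * Fg1) n"
      unfolding e by (cases n) (simp_all add: Fg1_def g1_card base0)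
  qed
  note L = this
  have "?L * FD^2 = (1 - fps_X) * (Fg1 * FD) * FD"
    unfolding L power2_eq_square[of FD] by (simp only: mult.assoc)
  also have "\<dots> = (1 - fps_X) * (fps_X * FG) * FD" by (simp only: Fg1_eq)
  also have "\<dots> = (1 - fps_X) * fps_X * (FG * FD)" by (simp only: mult.assoc)
  also have "\<dots> = (1 - fps_X) * fps_X * fps_X" by (simp only: FG_eq)
  also have "\<dots> = fps_X^2 - fps_X^3" by (simp add: algebra_simps power2_eq_square power3_eq_cube)
  finally show "?L * FD^2 = fps_X^2 - fps_X^3" .
qed

lemma part2: "Abs_fps (\<lambda>M. if M = 0 then 0 else of_int (int (h1 M) - int (h1 (M - 1))) :: rat)
           = (fps_X ^ 2 - fps_X ^ 3) / (1 - fps_X - fps_X ^ 2) ^ 2"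
proof (rule div_lemma)
  let ?L = "Abs_fps (\<lambda>M. if M = 0 then 0 else of_int (int (h1 M) - int (h1 (M - 1))) :: rat)"
  have "?L = (1 - fps_X) * Fh1"
  proof (rule fps_ext)
    fix n
    have e: "(1 - fps_X) * Fh1 = Fh1 - fps_X * Fh1" by (simp add: algebra_simps)
    show "fps_nth ?L n = fps_nth ((1 - fps_X) * Fh1) n"
      unfolding e by (cases n) (simp_all add: Fh1_def h1_card base0)
  qed
  note L = this
  have "?L * FD^2 = (1 - fps_X) * (Fh1 * FD) * FD"
    unfolding L power2_eq_square[of FD] by (simp only: mult.assoc)
  also have "\<dots> = (1 - fps_X) * (fps_X * FH) * FD" by (simp only: Fh1_eq)
  also have "\<dots> = (1 - fps_X) * fps_X * (FH * FD)" by (simp only: mult.assoc)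
  also have "\<dots> = (1 - fps_X) * fps_X * fps_X" by (simp only: FH_eq)
  also have "\<dots> = fps_X^2 - fps_X^3" by (simp add: algebra_simps power2_eq_square power3_eq_cube)
  finally show "?L * FD^2 = fps_X^2 - fps_X^3" .
qed

lemma part3: "Abs_fps (\<lambda>M. if M = 0 then 0 else of_int (int (g M) - int (h M)) :: rat)
           = (fps_X ^ 2 - fps_X ^ 3) / (1 - fps_X - fps_X ^ 2) ^ 2"
proof (rule div_lemma)
  let ?L = "Abs_fps (\<lambda>M. if M = 0 then 0 else of_int (int (g M) - int (h M)) :: rat)"
  have "?L = Fg - Fh"
    by (rule fps_ext) (simp add: Fg_def Fh_def g0)
  hence "?L * FD = Fg * FD - Fh * FD" by (simp only: left_diff_distrib)
  also have "\<dots> = (fps_X * FG + fps_X) - (fps_X^2 * FG + fps_X)" by (simp only: Fg_eq Fh_eq FG_FH)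
  also have "\<dots> = (fps_X - fps_X^2) * FG" by (simp add: algebra_simps)
  finally have L: "?L * FD = (fps_X - fps_X^2) * FG" .
  have "?L * FD^2 = (?L * FD) * FD" by (simp only: power2_eq_square[of FD] mult.assoc)
  also have "\<dots> = (fps_X - fps_X^2) * (FG * FD)" by (simp only: L mult.assoc)
  also have "\<dots> = (fps_X - fps_X^2) * fps_X" by (simp only: FG_eq)
  also have "\<dots> = fps_X^2 - fps_X^3" by (simp add: algebra_simps power2_eq_square power3_eq_cube)
  finally show "?L * FD^2 = fps_X^2 - fps_X^3" .
qed



theorem mainTheorem4:
  shows "Abs_fps (\<lambda>M. if M = 0 then 0 else of_int (int (g1 M) - int (g1 (M - 1))) :: rat)
           = (fps_X ^ 2 - fps_X ^ 3) / (1 - fps_X - fps_X ^ 2) ^ 2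
       \<and> Abs_fps (\<lambda>M. if M = 0 then 0 else of_int (int (h1 M) - int (h1 (M - 1))) :: rat)
           = (fps_X ^ 2 - fps_X ^ 3) / (1 - fps_X - fps_X ^ 2) ^ 2
       \<and> Abs_fps (\<lambda>M. if M = 0 then 0 else of_int (int (g M) - int (h M)) :: rat)
           = (fps_X ^ 2 - fps_X ^ 3) / (1 - fps_X - fps_X ^ 2) ^ 2"
  using part1 part2 part3 by blast

end
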